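(* Let $h:\omega\to\omega$ satisfy $1<h(n)<\omega$ for all $n$. Then $\mathbb{PT}_h$ is Cohen preserving.
   Context: $\mathbb{PT}_h$ is the poset of trees $p\subseteq\omega^{<\omega}$ such that: for all $t\in p$ and $l\in\mathrm{dom}(t)$, $t(l)<h(l)$; every $t\in p$ has either exactly one or exactly $h(l(t))$ immediate successors in $p$ (where $l(t)$ is the length of $t$); and every $t\in p$ has an extension $t'\in p$ with $h(l(t'))$ immediate successors in $p$. The order is inclusion. A forcing notion $\mathbb P$ is Cohen preserving if for every $p\in\mathbb P$ and every $\mathbb P$-name $\dot D$ with $p\Vdash$ "$\dot D\subseteq 2^{<\omega}$ is dense open", there are a dense set $E\subseteq 2^{<\omega}$ in the ground model and $q\le p$ with $q\Vdash \check E\subseteq\dot D$. *)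

theory Defs
  imports Main "HOL-Library.Sublist"
begin

definition succs :: "nat list set \<Rightarrow> nat list \<Rightarrow> nat set" where
  "succs p t = {i. t @ [i] \<in> p}"

(* The poset PT_h: conditions are nonempty trees (closed under initial segments);
   ordered by inclusion (q \<le> p iff q \<subseteq> p). *)
definition PT :: "(nat \<Rightarrow> nat) \<Rightarrow> nat list set set" where
  "PT h = {p. p \<noteq> {}
     \<and> (\<forall>t\<in>p. \<forall>s. prefix s t \<longrightarrow> s \<in> p)
     \<and> (\<forall>t\<in>p. \<forall>l<length t. t ! l < h l)
     \<and> (\<forall>t\<in>p. card (succs p t) = 1 \<or> card (succs p t) = h (length t))
     \<and> (\<forall>t\<in>p. \<exists>t'\<in>p. prefix t t' \<and> card (succs p t') = h (length t'))}"

(* Generic forcing notion: set of conditions P, order le (le q p = q is stronger). *)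
definition dense_below :: "'a set \<Rightarrow> ('a \<Rightarrow> 'a \<Rightarrow> bool) \<Rightarrow> 'a \<Rightarrow> 'a set \<Rightarrow> bool" where
  "dense_below P le p X = (\<forall>q\<in>P. le q p \<longrightarrow> (\<exists>r\<in>P. le r q \<and> r \<in> X))"

(* A P-name for a subset of 2^{<omega} is coded by N: N s is the set of conditions q
   such that (check s, q) belongs to the name.  forces_mem P le N q s  means
   q forces  check s \<in> name. *)
definition forces_mem ::
  "'a set \<Rightarrow> ('a \<Rightarrow> 'a \<Rightarrow> bool) \<Rightarrow> (bool list \<Rightarrow> 'a set) \<Rightarrow> 'a \<Rightarrow> bool list \<Rightarrow> bool" where
  "forces_mem P le N q s = dense_below P le q {r\<in>P. \<exists>q'\<in>P. q' \<in> N s \<and> le r q'}"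

definition forces_dense_open ::
  "'a set \<Rightarrow> ('a \<Rightarrow> 'a \<Rightarrow> bool) \<Rightarrow> (bool list \<Rightarrow> 'a set) \<Rightarrow> 'a \<Rightarrow> bool" where
  "forces_dense_open P le N p =
     ((\<forall>s. dense_below P le p {q\<in>P. \<exists>t. prefix s t \<and> forces_mem P le N q t})
      \<and> (\<forall>s t. prefix s t \<longrightarrow>
            (\<forall>q\<in>P. le q p \<longrightarrow> forces_mem P le N q s \<longrightarrow> forces_mem P le N q t)))"

definition dense_tree :: "bool list set \<Rightarrow> bool" where
  "dense_tree E = (\<forall>s. \<exists>t\<in>E. prefix s t)"

definition cohen_preserving :: "'a set \<Rightarrow> ('a \<Rightarrow> 'a \<Rightarrow> bool) \<Rightarrow> bool" where
  "cohen_preserving P le =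
     (\<forall>p\<in>P. \<forall>N. forces_dense_open P le N p \<longrightarrow>
        (\<exists>E. dense_tree E \<and> (\<exists>q\<in>P. le q p \<and> (\<forall>s\<in>E. forces_mem P le N q s))))"

end

theory Submission
  imports Defs "HOL-Library.Countable"
begin


definition sub :: "nat list set \<Rightarrow> nat list \<Rightarrow> nat list set" where
  "sub r w = {v\<in>r. prefix v w \<or> prefix w v}"

lemma PT_I:
  assumes "p \<noteq> {}" "\<forall>t\<in>p. \<forall>s. prefix s t \<longrightarrow> s \<in> p" "\<forall>t\<in>p. \<forall>l<length t. t ! l < h l"
    "\<forall>t\<in>p. card (succs p t) = 1 \<or> card (succs p t) = h (length t)"
    "\<forall>t\<in>p. \<exists>t'\<in>p. prefix t t' \<and> card (succs p t') = h (length t')"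
  shows "p \<in> PT h"
  using assms unfolding PT_def by simp

lemma PT_bd: "p \<in> PT h \<Longrightarrow> t \<in> p \<Longrightarrow> l < length t \<Longrightarrow> t ! l < h l"
  unfolding PT_def by simp

lemma PT_card: "p \<in> PT h \<Longrightarrow> t \<in> p \<Longrightarrow> card (succs p t) = 1 \<or> card (succs p t) = h (length t)"
  unfolding PT_def by simp

lemma PT_split: "p \<in> PT h \<Longrightarrow> t \<in> p \<Longrightarrow> \<exists>t'\<in>p. prefix t t' \<and> card (succs p t') = h (length t')"
  unfolding PT_def by simp

lemma PT_prefix: "r \<in> PT h \<Longrightarrow> t \<in> r \<Longrightarrow> prefix s t \<Longrightarrow> s \<in> r"
  unfolding PT_def by blast

lemma PT_nil: "r \<in> PT h \<Longrightarrow> [] \<in> r"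
  unfolding PT_def by auto

lemma PT_succ_ne:
  assumes hh: "\<forall>n. 1 < h n" and r: "r \<in> PT h" and t: "t \<in> r"
  shows "\<exists>i. t @ [i] \<in> r"
proof -
  have "card (succs r t) = 1 \<or> card (succs r t) = h (length t)" using PT_card[OF r t] .
  moreover have "1 < h (length t)" using hh by blast
  ultimately have "card (succs r t) \<noteq> 0" by linarith
  hence "succs r t \<noteq> {}" by force
  thus ?thesis unfolding succs_def by blast
qed

lemma PT_ext:
  assumes hh: "\<forall>n. 1 < h n" and r: "r \<in> PT h"
  shows "t \<in> r \<Longrightarrow> length t \<le> m \<Longrightarrow> \<exists>v\<in>r. prefix t v \<and> length v = m"
proof (induction m)
  case 0 thus ?case by auto
next
  case (Suc m)
  show ?case
  proof (cases "length t = Suc m")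
    case True thus ?thesis using Suc by auto
  next
    case False
    then obtain v where v: "v \<in> r" "prefix t v" "length v = m" using Suc by auto
    then obtain i where "v @ [i] \<in> r" using PT_succ_ne[OF hh r] by blast
    thus ?thesis using v by (metis length_append_singleton prefix_order.trans prefix_snoc)
  qed
qed

lemma level_finite:
  assumes r: "r \<in> PT h" shows "finite {u\<in>r. length u = L}"
proof -
  let ?A = "\<Union>l<L. {..<h l}"
  have "{u\<in>r. length u = L} \<subseteq> {xs. set xs \<subseteq> ?A \<and> length xs = L}"
  proof
    fix u assume u: "u \<in> {u\<in>r. length u = L}"
    hence "\<forall>l<length u. u ! l < h l" using PT_bd[OF r] u by simp
    thus "u \<in> {xs. set xs \<subseteq> ?A \<and> length xs = L}" using u
      by (fastforce simp: in_set_conv_nth)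
  qed
  moreover have "finite {xs. set xs \<subseteq> ?A \<and> length xs = L}"
    by (rule finite_lists_length_eq) auto
  ultimately show ?thesis by (rule finite_subset)
qed

lemma prefix_eq_len: "prefix u x \<Longrightarrow> (prefix x v \<or> prefix v x) \<Longrightarrow> length u = length v \<Longrightarrow> u = v"
proof -
  assume a: "prefix u x" "prefix x v \<or> prefix v x" "length u = length v"
  show "u = v"
  proof (cases "prefix x v")
    case True
    hence "prefix u v" using a(1) by (rule prefix_order.trans[rotated])
    thus ?thesis using a(3) prefix_length_prefix[of v v u] prefix_order.antisym by auto
  next
    case False
    hence "prefix v x" using a(2) by blast
    hence "prefix u v" using a(1,3) prefix_length_prefix[of u x v] by simp
    thus ?thesis using a(3) prefix_length_prefix[of v v u] prefix_order.antisym by auto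
  qed
qed

lemma prefix_snoc_nth: "prefix t w \<Longrightarrow> length t < length w \<Longrightarrow> prefix (t @ [w ! length t]) w"
  by (metis append_eq_conv_conj prefix_def take_Suc_conv_app_nth take_is_prefix)

lemma prefix_snoc_nth2: "prefix (t @ [i]) w \<Longrightarrow> i = w ! length t"
  by (metis length_append_singleton lessI nth_append_length prefix_def nth_append)


lemma succs_sub_ext: "prefix w t \<Longrightarrow> succs (sub r w) t = succs r t"
  unfolding succs_def sub_def by auto

lemma succs_sub_below:
  assumes "prefix t w" "length t < length w" "w \<in> r" "t \<in> r" "r \<in> PT h"
  shows "succs (sub r w) t = {w ! length t}"
proof
  show "succs (sub r w) t \<subseteq> {w ! length t}"
  proof
    fix i assume "i \<in> succs (sub r w) t"
    hence "prefix (t@[i]) w \<or> prefix w (t@[i])" unfolding succs_def sub_def by auto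
    moreover have "prefix w (t@[i]) \<Longrightarrow> w = t @ [i]"
    proof -
      assume wt: "prefix w (t@[i])"
      have "length w \<le> Suc (length t)" using prefix_length_le[OF wt] by simp
      hence "length (t@[i]) \<le> length w" using assms(2) by simp
      hence "prefix (t@[i]) w" using prefix_length_prefix[of "t@[i]" "t@[i]" w] wt by simp
      thus "w = t @ [i]" using wt prefix_order.antisym by blast
    qed
    ultimately show "i \<in> {w ! length t}" using prefix_snoc_nth2 by auto
  qed
next
  have "prefix (t @ [w ! length t]) w" using assms prefix_snoc_nth by blast
  moreover hence "t @ [w ! length t] \<in> r" using assms PT_prefix by blast
  ultimately show "{w ! length t} \<subseteq> succs (sub r w) t" unfolding succs_def sub_def by auto
qed

lemma sub_PT:
  assumes r: "r \<in> PT h" and w: "w \<in> r"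
  shows "sub r w \<in> PT h"
proof -
  let ?S = "sub r w"
  have ne: "?S \<noteq> {}" using w unfolding sub_def by auto
  have pc: "\<forall>t\<in>?S. \<forall>s. prefix s t \<longrightarrow> s \<in> ?S"
  proof (intro ballI allI impI)
    fix t s assume t: "t \<in> ?S" and st: "prefix s t"
    have "s \<in> r" using t st r PT_prefix unfolding sub_def by blast
    moreover have "prefix s w \<or> prefix w s" using t st unfolding sub_def
      using prefix_same_cases[of s t w] prefix_order.trans[of s t w] by auto
    ultimately show "s \<in> ?S" unfolding sub_def by auto
  qed
  have bd: "\<forall>t\<in>?S. \<forall>l<length t. t ! l < h l" using PT_bd[OF r] unfolding sub_def by simp
  have sc: "\<forall>t\<in>?S. card (succs ?S t) = 1 \<or> card (succs ?S t) = h (length t)"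
  proof
    fix t assume t: "t \<in> ?S"
    show "card (succs ?S t) = 1 \<or> card (succs ?S t) = h (length t)"
    proof (cases "prefix w t")
      case True
      thus ?thesis using succs_sub_ext[OF True] PT_card[OF r, of t] t unfolding sub_def by simp
    next
      case False
      hence "prefix t w" "length t < length w" using t unfolding sub_def
        using prefix_length_less[of t w] by (auto simp: strict_prefix_def)
      hence "succs ?S t = {w ! length t}" using succs_sub_below t w r unfolding sub_def by blast
      thus ?thesis by simp
    qed
  qed
  have sp: "\<forall>t\<in>?S. \<exists>t'\<in>?S. prefix t t' \<and> card (succs ?S t') = h (length t')"
  proof
    fix t assume t: "t \<in> ?S"
    show "\<exists>t'\<in>?S. prefix t t' \<and> card (succs ?S t') = h (length t')"
    proof (cases "prefix w t")
      case True
      then obtain t' where t': "t' \<in> r" "prefix t t'" "card (succs r t') = h (length t')"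
        using PT_split[OF r, of t] t unfolding sub_def by blast
      hence "prefix w t'" using True by auto
      thus ?thesis using t' succs_sub_ext unfolding sub_def by auto
    next
      case False
      hence tw: "prefix t w" using t unfolding sub_def by auto
      obtain t' where t': "t' \<in> r" "prefix w t'" "card (succs r t') = h (length t')"
        using PT_split[OF r w] by blast
      hence "prefix t t'" using tw by auto
      thus ?thesis using t' succs_sub_ext unfolding sub_def by auto
    qed
  qed
  show ?thesis by (rule PT_I[OF ne pc bd sc sp])
qed

lemma in_sub:
  assumes hh: "\<forall>n. 1 < h n" and r: "r \<in> PT h" and rs: "r \<subseteq> sub q u"
  shows "u \<in> r"
proof -
  obtain v where v: "v \<in> r" "length v = length u" using PT_ext[OF hh r PT_nil[OF r], of "length u"] by auto
  hence "prefix v u \<or> prefix u v" using rs unfolding sub_def by auto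
  hence "v = u" using v prefix_eq_len by blast
  thus ?thesis using v by simp
qed

lemma fm_mono:
  assumes a: "forces_mem P (\<subseteq>) N q t" and b: "q' \<subseteq> q"
  shows "forces_mem P (\<subseteq>) N q' t"
  unfolding forces_mem_def dense_below_def
proof (intro ballI impI)
  fix x assume x: "x \<in> P" "x \<subseteq> q'"
  have "x \<subseteq> q" using x(2) b by (rule subset_trans)
  thus "\<exists>r\<in>P. r \<subseteq> x \<and> r \<in> {r \<in> P. \<exists>q'\<in>P. q' \<in> N t \<and> r \<subseteq> q'}"
    using a x(1) unfolding forces_mem_def dense_below_def by simp
qed


lemma K_eq:
  assumes "length u = L" "length v = L" "x \<in> sub q v" "prefix u x"
  shows "u = v"
  using assms prefix_eq_len unfolding sub_def by auto

lemma long_ext: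
  assumes "length v = L" "x \<in> sub q v" "L \<le> length x"
  shows "prefix v x"
proof -
  have "prefix x v \<or> prefix v x" using assms(2) unfolding sub_def by simp
  thus ?thesis
  proof
    assume xv: "prefix x v"
    hence "prefix v x" using prefix_length_prefix[of v v x] assms(1,3) by simp
    thus ?thesis .
  next
    assume "prefix v x" thus ?thesis .
  qed
qed

locale U_setup =
  fixes h :: "nat \<Rightarrow> nat" and q :: "nat list set" and L :: nat and U and r :: "nat list \<Rightarrow> nat list set"
  assumes hh: "\<forall>n. 1 < h n" and q: "q \<in> PT h" and U: "U = {u\<in>q. length u = L}"
    and r: "\<forall>u\<in>U. r u \<in> PT h \<and> r u \<subseteq> sub q u"
begin

definition "R = (\<Union>u\<in>U. r u)"

lemma u_in: "u \<in> U \<Longrightarrow> u \<in> r u"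
  using in_sub[OF hh] r by blast

lemma R_sub: "R \<subseteq> q"
  using r unfolding R_def sub_def by blast

lemma R_low: "length v \<le> L \<Longrightarrow> v \<in> R \<longleftrightarrow> v \<in> q"
proof
  assume "length v \<le> L" "v \<in> q"
  then obtain u where u: "u \<in> q" "prefix v u" "length u = L" using PT_ext[OF hh q, of v L] by auto
  hence "u \<in> U" using U by auto
  hence "v \<in> r u" using u_in u r PT_prefix by blast
  thus "v \<in> R" using \<open>u \<in> U\<close> unfolding R_def by blast
qed (use R_sub in auto)

lemma R_long: "t \<in> R \<Longrightarrow> L \<le> length t \<Longrightarrow> \<exists>u\<in>U. t \<in> r u \<and> prefix u t"
  unfolding R_def using r U long_ext by blast

lemma R_succs: "u \<in> U \<Longrightarrow> t \<in> r u \<Longrightarrow> L \<le> length t \<Longrightarrow> succs R t = succs (r u) t"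
proof -
  assume u: "u \<in> U" and t: "t \<in> r u" "L \<le> length t"
  have ut: "prefix u t" using long_ext u t r U by blast
  show ?thesis unfolding succs_def
  proof (intro Collect_cong iffI)
    fix i assume "t @ [i] \<in> R"
    then obtain v where v: "v \<in> U" "t @ [i] \<in> r v" unfolding R_def by blast
    have "prefix u (t@[i])" using ut by auto
    hence "u = v" using K_eq[of u L v "t@[i]" q] v u U r by auto
    thus "t @ [i] \<in> r u" using v by simp
  qed (use u in \<open>auto simp: R_def\<close>)
qed

lemma R_PT: "R \<in> PT h"
proof -
  have ne: "R \<noteq> {}" using R_low[of "[]"] PT_nil[OF q] by auto
  have pc: "\<forall>t\<in>R. \<forall>s. prefix s t \<longrightarrow> s \<in> R"
  proof (intro ballI allI impI)
    fix t s assume "t \<in> R" "prefix s t"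
    then obtain u where u: "u \<in> U" "t \<in> r u" unfolding R_def by auto
    hence "s \<in> r u" using PT_prefix[of "r u" h t s] r \<open>prefix s t\<close> by simp
    thus "s \<in> R" using u(1) unfolding R_def by auto
  qed
  have bd: "\<forall>t\<in>R. \<forall>l<length t. t ! l < h l"
  proof (intro ballI allI impI)
    fix t l assume "t \<in> R" "l < length t"
    thus "t ! l < h l" using R_sub PT_bd[OF q, of t l] by auto
  qed
  have lowsuccs: "succs R t = succs q t" if lt: "length t < L" for t
  proof -
    have "t @ [i] \<in> R \<longleftrightarrow> t @ [i] \<in> q" for i using R_low[of "t @ [i]"] lt by simp
    thus ?thesis unfolding succs_def by simp
  qed
  have sc: "\<forall>t\<in>R. card (succs R t) = 1 \<or> card (succs R t) = h (length t)"
  proof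
    fix t assume t: "t \<in> R"
    show "card (succs R t) = 1 \<or> card (succs R t) = h (length t)"
    proof (cases "length t < L")
      case True
      have "t \<in> q" using t R_sub by auto
      thus ?thesis using lowsuccs[OF True] PT_card[OF q, of t] by simp
    next
      case False
      hence "L \<le> length t" by simp
      then obtain u where u: "u \<in> U" "t \<in> r u" using R_long[OF t] by auto
      have "r u \<in> PT h" using r u(1) by simp
      thus ?thesis using R_succs[OF u \<open>L \<le> length t\<close>] PT_card[of "r u" h t] u(2) by simp
    qed
  qed
  have sp: "\<forall>t\<in>R. \<exists>t'\<in>R. prefix t t' \<and> card (succs R t') = h (length t')"
  proof
    fix t assume t: "t \<in> R"
    obtain u where u: "u \<in> U" "prefix t u \<or> prefix u t" "t \<in> r u"
    proof (cases "length t < L")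
      case True
      have "t \<in> q" using t R_sub by auto
      then obtain u where u0: "u \<in> q" "prefix t u" "length u = L"
        using PT_ext[OF hh q, of t L] True by auto
      have uU: "u \<in> U" using U u0 by simp
      have "u \<in> r u" using u_in[OF uU] .
      moreover have "r u \<in> PT h" using r uU by simp
      ultimately have "t \<in> r u" using PT_prefix[of "r u" h u t] u0(2) by simp
      thus ?thesis using that[of u] uU u0(2) by simp
    next
      case False
      hence "L \<le> length t" by simp
      then obtain u where "u \<in> U" "t \<in> r u" "prefix u t" using R_long[OF t] by auto
      thus ?thesis using that[of u] by simp
    qed
    have ruPT: "r u \<in> PT h" using r u(1) by simp
    have ifin: "(if prefix u t then t else u) \<in> r u" using u u_in by auto
    obtain t' where t': "t' \<in> r u" "prefix (if prefix u t then t else u) t'" "card (succs (r u) t') = h (length t')"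
      using PT_split[OF ruPT ifin] by auto
    have tt': "prefix t t'" "prefix u t'" using t' u by (auto split: if_splits)
    have "length u = L" using u(1) U by simp
    hence "L \<le> length t'" using prefix_length_le[OF tt'(2)] by simp
    hence "succs R t' = succs (r u) t'" using R_succs[OF u(1) t'(1)] by simp
    moreover have "t' \<in> R" using t'(1) u(1) unfolding R_def by auto
    ultimately show "\<exists>t'\<in>R. prefix t t' \<and> card (succs R t') = h (length t')"
      using t'(3) tt'(1) by auto
  qed
  show ?thesis by (rule PT_I[OF ne pc bd sc sp])
qed

lemma R_forces:
  assumes "\<forall>u\<in>U. forces_mem (PT h) (\<subseteq>) N (r u) t"
  shows "forces_mem (PT h) (\<subseteq>) N R t"
  unfolding forces_mem_def dense_below_def
proof (intro ballI impI)
  fix x assume x: "x \<in> PT h" "x \<subseteq> R"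
  define X where "X = {r \<in> PT h. \<exists>q'\<in>PT h. q' \<in> N t \<and> r \<subseteq> q'}"
  obtain y where y: "y \<in> x" "length y = L" using PT_ext[OF hh x(1) PT_nil[OF x(1)], of L] by auto
  hence yU: "y \<in> U" using x R_sub U by auto
  have x'PT: "sub x y \<in> PT h" using sub_PT x y by blast
  have "sub x y \<subseteq> r y"
  proof
    fix z assume z: "z \<in> sub x y"
    show "z \<in> r y"
    proof (cases "prefix z y")
      case True thus ?thesis using u_in[OF yU] r yU PT_prefix by blast
    next
      case False
      hence "prefix y z" "z \<in> R" using z x unfolding sub_def by auto
      then obtain v where "v \<in> U" "z \<in> r v" unfolding R_def by blast
      hence "y = v" using K_eq[of y L v z q] \<open>prefix y z\<close> y U r by auto
      thus ?thesis using \<open>z \<in> r v\<close> by simp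
    qed
  qed
  moreover have "forces_mem (PT h) (\<subseteq>) N (r y) t" using assms yU by simp
  ultimately have "\<exists>r'\<in>PT h. r' \<subseteq> sub x y \<and> r' \<in> X"
    using x'PT unfolding forces_mem_def dense_below_def X_def by simp
  then obtain r' where r': "r' \<in> PT h" "r' \<subseteq> sub x y" "r' \<in> X" by blast
  moreover have "sub x y \<subseteq> x" unfolding sub_def by auto
  ultimately have "r' \<subseteq> x \<and> r' \<in> X" "r' \<in> PT h" by auto
  thus "\<exists>r\<in>PT h. r \<subseteq> x \<and> r \<in> {r \<in> PT h. \<exists>q'\<in>PT h. q' \<in> N t \<and> r \<subseteq> q'}"
    unfolding X_def by (intro bexI[of _ r'])
qed

end


definition good :: "(nat \<Rightarrow> nat) \<Rightarrow> nat list set \<Rightarrow> nat list \<Rightarrow> nat list \<Rightarrow> bool" where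
  "good h x u w = (w \<in> x \<and> prefix u w \<and> card (succs x w) = h (length w) \<and> (\<forall>v\<in>x. prefix v w \<or> prefix w v))"

definition inv4 where
  "inv4 h N q t r u = (r \<in> PT h \<and> r \<subseteq> sub q u \<and> forces_mem (PT h) (\<subseteq>) N r t \<and> (\<exists>w. good h r u w))"

lemma D1: "forces_dense_open P le N p \<Longrightarrow> dense_below P le p {q\<in>P. \<exists>t. prefix s t \<and> forces_mem P le N q t}"
  unfolding forces_dense_open_def by simp

lemma D2: "forces_dense_open P le N p \<Longrightarrow> prefix s t \<Longrightarrow> q \<in> P \<Longrightarrow> le q p \<Longrightarrow> forces_mem P le N q s
   \<Longrightarrow> forces_mem P le N q t"
  unfolding forces_dense_open_def by simp

lemma lemmaB:
  assumes hh: "\<forall>n. 1 < h n" and q: "q \<in> PT h" and qp: "q \<subseteq> p"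
    and D: "forces_dense_open (PT h) (\<subseteq>) N p"
    and fin: "finite V"
  shows "V \<subseteq> {u\<in>q. length u = L} \<Longrightarrow> \<exists>t r. prefix s t \<and> (\<forall>u\<in>V. inv4 h N q t (r u) u)"
  using fin
proof (induction V rule: finite_induct)
  case empty thus ?case by auto
next
  case (insert u V)
  hence "V \<subseteq> {u\<in>q. length u = L}" by simp
  then obtain t r where tr: "prefix s t" "\<forall>u\<in>V. inv4 h N q t (r u) u" using insert.IH by blast
  have uq: "u \<in> q" using insert.prems by simp
  have sPT: "sub q u \<in> PT h" using sub_PT[OF q uq] .
  have "sub q u \<subseteq> p" using qp unfolding sub_def by auto
  hence "\<exists>r'\<in>PT h. r' \<subseteq> sub q u \<and> r' \<in> {q\<in>PT h. \<exists>t'. prefix t t' \<and> forces_mem (PT h) (\<subseteq>) N q t'}"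
    using D1[OF D, of t] sPT unfolding dense_below_def by simp
  then obtain r' t' where r': "r' \<in> PT h" "r' \<subseteq> sub q u" "prefix t t'"
      "forces_mem (PT h) (\<subseteq>) N r' t'" by auto
  have "u \<in> r'" using in_sub[OF hh r'(1,2)] .
  then obtain w where w: "w \<in> r'" "prefix u w" "card (succs r' w) = h (length w)"
    using PT_split[OF r'(1)] by auto
  define r'' where "r'' = sub r' w"
  have r''1: "r'' \<in> PT h" unfolding r''_def using sub_PT[OF r'(1) w(1)] .
  have r''2: "r'' \<subseteq> sub q u" using r'(2) unfolding r''_def sub_def by auto
  have r''3: "forces_mem (PT h) (\<subseteq>) N r'' t'" using fm_mono[OF r'(4)] unfolding r''_def sub_def by auto
  have r''4: "good h r'' u w"
    using w succs_sub_ext[of w w r'] unfolding r''_def good_def sub_def by auto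
  have new: "inv4 h N q t' r'' u" unfolding inv4_def using r''1 r''2 r''3 r''4 by blast
  have old: "inv4 h N q t' (r v) v" if v: "v \<in> V" for v
  proof -
    have i: "inv4 h N q t (r v) v" using tr(2) v by simp
    hence "r v \<subseteq> p" using qp unfolding inv4_def sub_def by auto
    moreover have "r v \<in> PT h" "forces_mem (PT h) (\<subseteq>) N (r v) t" using i unfolding inv4_def by auto
    ultimately have "forces_mem (PT h) (\<subseteq>) N (r v) t'" using D2[OF D r'(3)] by simp
    thus ?thesis using i unfolding inv4_def by simp
  qed
  have "\<forall>v\<in>insert u V. inv4 h N q t' ((r(u := r'')) v) v"
  proof
    fix v assume "v \<in> insert u V"
    thus "inv4 h N q t' ((r(u := r'')) v) v"
    proof (cases "v = u")
      case True thus ?thesis using new by simp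
    next
      case False thus ?thesis using old \<open>v \<in> insert u V\<close> by simp
    qed
  qed
  moreover have "prefix s t'" using tr(1) r'(3) by (rule prefix_order.trans)
  ultimately show ?case by blast
qed

lemma step:
  assumes hh: "\<forall>n. 1 < h n" and q: "q \<in> PT h" and qp: "q \<subseteq> p"
    and D: "forces_dense_open (PT h) (\<subseteq>) N p"
  shows "\<exists>q' L' t. q' \<in> PT h \<and> q' \<subseteq> q \<and> (\<forall>v. length v \<le> L \<longrightarrow> (v \<in> q' \<longleftrightarrow> v \<in> q)) \<and> L < L'
    \<and> (\<forall>v\<in>q'. length v = L' \<longrightarrow> (\<exists>w. prefix w v \<and> L \<le> length w \<and> length w < L'
           \<and> card (succs q' w) = h (length w)))
    \<and> prefix s t \<and> forces_mem (PT h) (\<subseteq>) N q' t"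
proof -
  define U where "U = {u\<in>q. length u = L}"
  have finU: "finite U" using level_finite[OF q] unfolding U_def .
  obtain t r where tr: "prefix s t" "\<forall>u\<in>U. inv4 h N q t (r u) u"
    using lemmaB[OF hh q qp D finU, of L s] unfolding U_def by auto
  have rr: "\<forall>u\<in>U. r u \<in> PT h \<and> r u \<subseteq> sub q u" using tr(2) unfolding inv4_def by simp
  have rf: "\<forall>u\<in>U. forces_mem (PT h) (\<subseteq>) N (r u) t" using tr(2) unfolding inv4_def by simp
  have ex: "\<forall>u\<in>U. \<exists>w. good h (r u) u w" using tr(2) unfolding inv4_def by simp
  obtain wf where wf: "\<forall>u\<in>U. good h (r u) u (wf u)" using bchoice[OF ex] by (elim exE)
  interpret U_setup h q L U r
    by unfold_locales (use hh q U_def rr in auto)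
  obtain v0 where "v0 \<in> q" "length v0 = L" using PT_ext[OF hh q PT_nil[OF q], of L] by auto
  hence Une: "U \<noteq> {}" unfolding U_def by auto
  define L' where "L' = Suc (Max ((\<lambda>u. length (wf u)) ` U))"
  have wle: "length (wf u) < L'" if u: "u \<in> U" for u
  proof -
    have "length (wf u) \<le> Max ((\<lambda>u. length (wf u)) ` U)" using finU u by simp
    thus ?thesis unfolding L'_def by simp
  qed
  have wge: "L \<le> length (wf u)" if u: "u \<in> U" for u
  proof -
    have "prefix u (wf u)" using wf u unfolding good_def by simp
    moreover have "length u = L" using u unfolding U_def by simp
    ultimately show ?thesis using prefix_length_le[of u "wf u"] by simp
  qed
  obtain u0 where "u0 \<in> U" using Une by auto
  hence LL: "L < L'" using wle[of u0] wge[of u0] by simp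
  have spl: "\<forall>v\<in>R. length v = L' \<longrightarrow> (\<exists>w. prefix w v \<and> L \<le> length w \<and> length w < L'
           \<and> card (succs R w) = h (length w))"
  proof (intro ballI impI)
    fix v assume v: "v \<in> R" "length v = L'"
    then obtain u where u: "u \<in> U" "v \<in> r u" unfolding R_def by auto
    have g: "good h (r u) u (wf u)" using wf u by simp
    have "prefix v (wf u) \<or> prefix (wf u) v" using g u unfolding good_def by simp
    moreover have "\<not> prefix v (wf u)"
      using prefix_length_le[of v "wf u"] v(2) wle[OF u(1)] by auto
    ultimately have pw: "prefix (wf u) v" by simp
    have "wf u \<in> r u" using g unfolding good_def by simp
    hence "succs R (wf u) = succs (r u) (wf u)"
      using R_succs[OF u(1)] wge[OF u(1)] by simp
    hence "card (succs R (wf u)) = h (length (wf u))" using g unfolding good_def by simp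
    thus "\<exists>w. prefix w v \<and> L \<le> length w \<and> length w < L' \<and> card (succs R w) = h (length w)"
      using pw wge[OF u(1)] wle[OF u(1)] by blast
  qed
  have RF: "forces_mem (PT h) (\<subseteq>) N R t" using R_forces[OF rf] .
  have RL: "\<forall>v. length v \<le> L \<longrightarrow> (v \<in> R \<longleftrightarrow> v \<in> q)" using R_low by simp
  show ?thesis
    apply (rule exI[of _ R], rule exI[of _ L'], rule exI[of _ t])
    using R_PT R_sub RL LL spl tr(1) RF by simp
qed


definition Pr where
  "Pr h N p s L q x = (case x of (q', L', t) \<Rightarrow> q' \<in> PT h \<and> q' \<subseteq> q \<and> (\<forall>v. length v \<le> L \<longrightarrow> (v \<in> q' \<longleftrightarrow> v \<in> q)) \<and> L < L'
    \<and> (\<forall>v\<in>q'. length v = L' \<longrightarrow> (\<exists>w. prefix w v \<and> L \<le> length w \<and> length w < L'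
           \<and> card (succs q' w) = h (length w)))
    \<and> prefix s t \<and> forces_mem (PT h) (\<subseteq>) N q' t)"

theorem lemma3p4:
  fixes h :: "nat \<Rightarrow> nat"
  assumes "\<forall>n. 1 < h n"
  shows "cohen_preserving (PT h) (\<subseteq>)"
  unfolding cohen_preserving_def
proof (intro ballI allI impI)
  note hh = assms
  fix p N assume p: "p \<in> PT h" and D: "forces_dense_open (PT h) (\<subseteq>) N p"
  have "\<forall>y. \<exists>x. (fst (snd y)) \<in> PT h \<and> fst (snd y) \<subseteq> p \<longrightarrow>
          Pr h N p (from_nat (fst y)) (snd (snd y)) (fst (snd y)) x"
  proof
    fix y :: "nat \<times> nat list set \<times> nat"
    show "\<exists>x. (fst (snd y)) \<in> PT h \<and> fst (snd y) \<subseteq> p \<longrightarrow>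
          Pr h N p (from_nat (fst y)) (snd (snd y)) (fst (snd y)) x"
      using step[OF hh _ _ D, of "fst (snd y)" "snd (snd y)" "from_nat (fst y)"]
      unfolding Pr_def by auto
  qed
  then obtain G where G0: "\<forall>y. (fst (snd y)) \<in> PT h \<and> fst (snd y) \<subseteq> p \<longrightarrow>
          Pr h N p (from_nat (fst y)) (snd (snd y)) (fst (snd y)) (G y)"
    by (elim choice[THEN exE])
  have G: "Pr h N p (from_nat (fst y)) (snd (snd y)) (fst (snd y)) (G y)"
    if "(fst (snd y)) \<in> PT h \<and> fst (snd y) \<subseteq> p" for y
    using mp[OF spec[OF G0, of y] that] .
  define seq where "seq = rec_nat (p, 0::nat) (\<lambda>n x. (fst (G (n, fst x, snd x)), fst (snd (G (n, fst x, snd x)))))"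
  define Q where "Q n = fst (seq n)" for n
  define Lv where "Lv n = snd (seq n)" for n
  define T where "T n = snd (snd (G (n, Q n, Lv n)))" for n
  have Q0: "Q 0 = p" "Lv 0 = 0" unfolding Q_def Lv_def seq_def by auto
  have QS: "G (n, Q n, Lv n) = (Q (Suc n), Lv (Suc n), T n)" for n
    unfolding Q_def Lv_def seq_def T_def by (simp add: prod_eq_iff)
  have inv: "Q n \<in> PT h \<and> Q n \<subseteq> p" for n
  proof (induction n)
    case 0 thus ?case using Q0 p by auto
  next
    case (Suc n)
    thus ?case using G[of "(n, Q n, Lv n)"] QS[of n] unfolding Pr_def by auto
  qed
  have PrS: "Pr h N p (from_nat n) (Lv n) (Q n) (Q (Suc n), Lv (Suc n), T n)" for n
    using G[of "(n, Q n, Lv n)"] QS[of n] inv[of n] by auto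
  have sub1: "Q (Suc n) \<subseteq> Q n" for n using PrS[of n] unfolding Pr_def by auto
  have agr1: "length v \<le> Lv n \<Longrightarrow> v \<in> Q (Suc n) \<longleftrightarrow> v \<in> Q n" for v n
    using PrS[of n] unfolding Pr_def by auto
  have Lless: "Lv n < Lv (Suc n)" for n using PrS[of n] unfolding Pr_def by auto
  have splitS: "\<forall>v\<in>Q (Suc n). length v = Lv (Suc n) \<longrightarrow> (\<exists>w. prefix w v \<and> Lv n \<le> length w
       \<and> length w < Lv (Suc n) \<and> card (succs (Q (Suc n)) w) = h (length w))" for n
    using PrS[of n] unfolding Pr_def by auto
  have Tpre: "prefix (from_nat n) (T n)" and Tf: "forces_mem (PT h) (\<subseteq>) N (Q (Suc n)) (T n)" for n
    using PrS[of n] unfolding Pr_def by auto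
  have Lmono: "n \<le> m \<Longrightarrow> Lv n \<le> Lv m" for n m
    using Lless by (meson less_imp_le_nat lift_Suc_mono_le)
  have Lge: "n \<le> Lv n" for n
    by (induction n) (use Lless in \<open>auto simp: Q0 Suc_le_eq intro: le_less_trans\<close>)
  have Qanti: "n \<le> m \<Longrightarrow> Q m \<subseteq> Q n" for n m
    using sub1 by (meson lift_Suc_antimono_le)
  have agr: "n \<le> m \<Longrightarrow> length v \<le> Lv n \<Longrightarrow> v \<in> Q m \<longleftrightarrow> v \<in> Q n" for n m v
  proof (induction m rule: dec_induct)
    case base thus ?case by simp
  next
    case (step m)
    thus ?case using agr1[of v m] Lmono[of n m] by auto
  qed
  define Ql where "Ql = (\<Inter>n. Q n)"
  have Qlagr: "length v \<le> Lv n \<Longrightarrow> v \<in> Ql \<longleftrightarrow> v \<in> Q n" for v n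
  proof
    assume l: "length v \<le> Lv n" and v: "v \<in> Q n"
    have "v \<in> Q k" for k
    proof (cases "k \<le> n")
      case True thus ?thesis using Qanti v by blast
    next
      case False thus ?thesis using agr[of n k v] l v by auto
    qed
    thus "v \<in> Ql" unfolding Ql_def by blast
  qed (auto simp: Ql_def)
  have succsagr: "succs Ql t = succs (Q n) t" if lt: "length t < Lv n" for t n
  proof -
    have "t @ [i] \<in> Ql \<longleftrightarrow> t @ [i] \<in> Q n" for i using Qlagr[of "t @ [i]" n] lt by simp
    thus ?thesis unfolding succs_def by simp
  qed
  have inQ: "t \<in> Q n" if "t \<in> Ql" for t n using that unfolding Ql_def by simp
  have QlPT: "Ql \<in> PT h"
  proof -
    have ne: "Ql \<noteq> {}" using Qlagr[of "[]" 0] PT_nil[OF p] Q0 by auto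
    have pc: "\<forall>t\<in>Ql. \<forall>s. prefix s t \<longrightarrow> s \<in> Ql"
    proof (intro ballI allI impI)
      fix t s assume t: "t \<in> Ql" and st: "prefix s t"
      have "s \<in> Q n" for n using PT_prefix[OF conjunct1[OF inv[of n]] inQ[OF t] st] .
      thus "s \<in> Ql" unfolding Ql_def by simp
    qed
    have bd: "\<forall>t\<in>Ql. \<forall>l<length t. t ! l < h l"
    proof (intro ballI allI impI)
      fix t l assume "t \<in> Ql" "l < length t"
      thus "t ! l < h l" using PT_bd[OF conjunct1[OF inv[of 0]] inQ[of t 0]] by simp
    qed
    have sc: "\<forall>t\<in>Ql. card (succs Ql t) = 1 \<or> card (succs Ql t) = h (length t)"
    proof
      fix t assume t: "t \<in> Ql"
      have lt: "length t < Lv (Suc (length t))" using Lge[of "Suc (length t)"] by simp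
      have "t \<in> Q (Suc (length t))" using inQ[OF t] .
      thus "card (succs Ql t) = 1 \<or> card (succs Ql t) = h (length t)"
        using succsagr[OF lt] PT_card[OF conjunct1[OF inv[of "Suc (length t)"]]] by simp
    qed
    have sp: "\<forall>t\<in>Ql. \<exists>t'\<in>Ql. prefix t t' \<and> card (succs Ql t') = h (length t')"
    proof
      fix t assume t: "t \<in> Ql"
      define n where "n = length t"
      have tn: "length t \<le> Lv n" using Lge n_def by simp
      have "t \<in> Q (Suc n)" using inQ[OF t] .
      moreover have "length t \<le> Lv (Suc n)" using tn Lless[of n] by simp
      ultimately obtain v where v: "v \<in> Q (Suc n)" "prefix t v" "length v = Lv (Suc n)"
        using PT_ext[OF hh conjunct1[OF inv[of "Suc n"]], of t "Lv (Suc n)"] by auto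
      have "\<exists>w. prefix w v \<and> Lv n \<le> length w \<and> length w < Lv (Suc n)
           \<and> card (succs (Q (Suc n)) w) = h (length w)"
        using splitS[of n] v(1,3) by simp
      then obtain w where w: "prefix w v" "Lv n \<le> length w" "length w < Lv (Suc n)"
          "card (succs (Q (Suc n)) w) = h (length w)"
        by (elim exE conjE)
      have "length t \<le> length w" using w(2) tn by simp
      hence tw: "prefix t w" using prefix_length_prefix[OF v(2) w(1)] by simp
      have wQ: "w \<in> Q (Suc n)" using PT_prefix[OF conjunct1[OF inv[of "Suc n"]] v(1) w(1)] .
      have wl: "length w \<le> Lv (Suc n)" using w(3) by simp
      have wQl: "w \<in> Ql" using Qlagr[OF wl] wQ by simp
      have "succs Ql w = succs (Q (Suc n)) w" using succsagr[OF w(3)] .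
      hence "card (succs Ql w) = h (length w)" using w(4) by simp
      thus "\<exists>t'\<in>Ql. prefix t t' \<and> card (succs Ql t') = h (length t')"
        using wQl tw by (intro bexI[of _ w]) simp_all
    qed
    show ?thesis by (rule PT_I[OF ne pc bd sc sp])
  qed
  have "dense_tree (range T)"
    unfolding dense_tree_def
  proof
    fix s :: "bool list"
    have "prefix s (T (to_nat s))" using Tpre[of "to_nat s"] by simp
    thus "\<exists>t\<in>range T. prefix s t" by (intro bexI[of _ "T (to_nat s)"]) simp_all
  qed
  moreover have "Ql \<subseteq> p" using Q0 inQ[of _ 0] by auto
  moreover have "\<forall>s\<in>range T. forces_mem (PT h) (\<subseteq>) N Ql s"
  proof
    fix s assume "s \<in> range T"
    then obtain n where n: "s = T n" by auto
    have "Ql \<subseteq> Q (Suc n)" using inQ by auto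
    thus "forces_mem (PT h) (\<subseteq>) N Ql s" using fm_mono[OF Tf[of n]] n by simp
  qed
  ultimately show "\<exists>E. dense_tree E \<and> (\<exists>q\<in>PT h. q \<subseteq> p \<and> (\<forall>s\<in>E. forces_mem (PT h) (\<subseteq>) N q s))"
    using QlPT by (intro exI[of _ "range T"] conjI bexI[of _ Ql]) simp_all
qed

end
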